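(* Let $X$ be an extensible marked Dynkin diagram with $d$ nodes and let $n\ge d$ be such that $\det(X_n)\ne0$. Fix $i$ with $1\le i\le n$ and write $\omega_i^{(n)}=\sum_{k=1}^n c_k\alpha_k^{(n)}$. Then $a_i=\det(X_n)\,c_n$.
   Context: A marked Dynkin diagram $X$ has nodes $1,\dots,d$ with node $d$ distinguished and symmetrizable generalized Cartan matrix $C(X)$. For $m\ge d$, $X_m$ is obtained by attaching a simply-laced chain of new nodes $d+1,\dots,m$ to node $d$ (so $C(X_m)$ has $C(X)$ as upper-left block, $2$ on the remaining diagonal, $-1$ in positions $(i,i+1),(i+1,i)$ for $d\le i<m$, $0$ elsewhere); $X_{d-1}$ denotes $X$ with node $d$ and its edges deleted. $\det(Y)$ is the determinant of the generalized Cartan matrix of $Y$. The sequence $\det(X_m)$, $m\ge d$, is arithmetic with common difference $\Delta$; $X$ is extensible if $\Delta\ne0$, $\det(X)\ne0$ and $\gcd(\Delta,\det X)=1$. For $\mathfrak g(X_n)$: simple roots $\alpha_k^{(n)}$ and fundamental weights $\omega_i^{(n)}$. The integers $a_i$ are defined by: for $1\le i\le d$, $a_i=\det(X)\,(C(X)^{-1})_{d\,i}$ (equivalently $\det(X)\check\omega_d=\sum_{i=1}^d a_i\check\alpha_i$, where $\check\alpha_i$ are the simple coroots of $X$ and $\check\omega_d$ is the element of their span with $\alpha_j(\check\omega_d)=\delta_{jd}$); for $i>d$, $a_i=\det(X_{i-1})$. *)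

theory Defs
  imports "Jordan_Normal_Form.Determinant" "Jordan_Normal_Form.Gauss_Jordan_Elimination"
begin

text \<open>A marked Dynkin diagram X with d nodes is given by its d x d
  integer generalized Cartan matrix C, with C(i,j) = alpha_j(coroot_i) (Kac convention).
  Node k (1-based) of the paper is row/column index k-1 (0-based) in the matrix.
  The distinguished node d is index d-1.\<close>

definition gcm :: "int mat \<Rightarrow> nat \<Rightarrow> bool" where
  "gcm C d \<longleftrightarrow> C \<in> carrier_mat d d \<and>
     (\<forall>i<d. C $$ (i,i) = 2) \<and>
     (\<forall>i<d. \<forall>j<d. i \<noteq> j \<longrightarrow> C $$ (i,j) \<le> 0) \<and>
     (\<forall>i<d. \<forall>j<d. C $$ (i,j) = 0 \<longleftrightarrow> C $$ (j,i) = 0)"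

definition symmetrizable :: "int mat \<Rightarrow> nat \<Rightarrow> bool" where
  "symmetrizable C d \<longleftrightarrow> (\<exists>e :: nat \<Rightarrow> rat. (\<forall>i<d. e i > 0) \<and>
      (\<forall>i<d. \<forall>j<d. e i * of_int (C $$ (i,j)) = e j * of_int (C $$ (j,i))))"

text \<open>Cartan matrix of X_m (m \<ge> d): attach a simply-laced chain of nodes d+1..m to node d.\<close>
definition ext_cartan :: "int mat \<Rightarrow> nat \<Rightarrow> nat \<Rightarrow> int mat" where
  "ext_cartan C d m = mat m m (\<lambda>(i,j).
      if i < d \<and> j < d then C $$ (i,j)
      else if i = j then 2
      else if d - 1 \<le> i \<and> d - 1 \<le> j \<and> (j = i + 1 \<or> i = j + 1) then -1
      else 0)"

definition detX :: "int mat \<Rightarrow> nat \<Rightarrow> nat \<Rightarrow> int" where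
  "detX C d m = det (ext_cartan C d m)"

text \<open>Common difference of the arithmetic sequence det(X_m), m \<ge> d.\<close>
definition Delta :: "int mat \<Rightarrow> nat \<Rightarrow> int" where
  "Delta C d = detX C d (d+1) - detX C d d"

definition extensible :: "int mat \<Rightarrow> nat \<Rightarrow> bool" where
  "extensible C d \<longleftrightarrow> Delta C d \<noteq> 0 \<and> det C \<noteq> 0 \<and> gcd (Delta C d) (det C) = 1"

definition rat_inverse :: "int mat \<Rightarrow> rat mat" where
  "rat_inverse C = (case mat_inverse (map_mat of_int C) of Some B \<Rightarrow> B
                      | None \<Rightarrow> 0\<^sub>m (dim_row C) (dim_col C))"

definition a_coef :: "int mat \<Rightarrow> nat \<Rightarrow> nat \<Rightarrow> rat" where
  "a_coef C d i = (if i \<le> d then of_int (det C) * rat_inverse C $$ (d-1, i-1)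
                   else of_int (detX C d (i-1)))"

text \<open>c (indexed 1..n) are the coefficients of the fundamental weight omega_i of g(X_n)
  in the simple roots: omega_i = sum_k c_k alpha_k.  Evaluating on the simple coroot
  coroot_j gives sum_k c_k alpha_k(coroot_j) = sum_k C_n(j,k) c_k = delta_{ij}.\<close>
definition fund_weight_coeffs :: "int mat \<Rightarrow> nat \<Rightarrow> nat \<Rightarrow> nat \<Rightarrow> (nat \<Rightarrow> rat) \<Rightarrow> bool" where
  "fund_weight_coeffs C d n i c \<longleftrightarrow>
     (\<forall>j\<in>{1..n}. (\<Sum>k=1..n. of_int (ext_cartan C d n $$ (j-1, k-1)) * c k)
                  = (if j = i then 1 else 0))"

end

theory Submission imports Defs begin

lemma ext_carrier[simp]: "ext_cartan C d n \<in> carrier_mat n n"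
  unfolding ext_cartan_def by auto

lemma ext_dims[simp]: "dim_row (ext_cartan C d n) = n" "dim_col (ext_cartan C d n) = n"
  unfolding ext_cartan_def by auto

lemma ext_sub: "a < m \<Longrightarrow> b < m \<Longrightarrow> m \<le> n \<Longrightarrow>
   ext_cartan C d n $$ (a,b) = ext_cartan C d m $$ (a,b)"
  unfolding ext_cartan_def by auto

lemma ext_d: "C \<in> carrier_mat d d \<Longrightarrow> ext_cartan C d d = C"
  by (rule eq_matI) (auto simp: ext_cartan_def)

lemma step:
  assumes "d \<le> n" "i - 1 < n" "d \<ge> 1"
  shows "det (mat_delete (ext_cartan C d (Suc n)) (i-1) n)
       = - det (mat_delete (ext_cartan C d n) (i-1) (n-1))"
proof -
  define M where "M = mat_delete (ext_cartan C d (Suc n)) (i-1) n"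
  have M: "M \<in> carrier_mat n n" unfolding M_def using mat_delete_carrier[OF ext_carrier, of C d "Suc n"] by simp
  have n1: "n - 1 < n" using assms by auto
  have row: "M $$ (n-1, j) = (if j = n-1 then -1 else 0)" if "j < n" for j
    using that assms unfolding M_def mat_delete_def ext_cartan_def by auto
  have "det M = (\<Sum>j<n. M $$ (n-1,j) * cofactor M (n-1) j)"
    by (rule laplace_expansion_row[OF M n1])
  also have "\<dots> = (\<Sum>j<n. (if j = n-1 then - cofactor M (n-1) j else 0))"
  proof (rule sum.cong[OF refl])
    fix j assume "j \<in> {..<n}"
    then show "M $$ (n-1,j) * cofactor M (n-1) j = (if j = n-1 then - cofactor M (n-1) j else 0)"
      using row[of j] by (cases "j = n-1") simp_all
  qed
  also have "\<dots> = - cofactor M (n-1) (n-1)" using n1 by (simp add: sum.delta)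
  also have "cofactor M (n-1) (n-1) = det (mat_delete M (n-1) (n-1))"
    unfolding cofactor_def by (simp add: mult_2[symmetric])
  also have "mat_delete M (n-1) (n-1) = mat_delete (ext_cartan C d n) (i-1) (n-1)"
  proof (rule eq_matI)
    fix a b assume ab: "a < dim_row (mat_delete (ext_cartan C d n) (i-1) (n-1))"
       "b < dim_col (mat_delete (ext_cartan C d n) (i-1) (n-1))"
    hence a: "a < n - 1" and b: "b < n - 1" by auto
    have "mat_delete M (n-1) (n-1) $$ (a,b) = M $$ (a, b)"
      using a b M unfolding mat_delete_def by auto
    also have "\<dots> = ext_cartan C d (Suc n) $$ (if a < i-1 then a else Suc a, b)"
      using a b unfolding M_def mat_delete_def by auto
    also have "\<dots> = ext_cartan C d n $$ (if a < i-1 then a else Suc a, b)"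
      using a b by (intro ext_sub) auto
    also have "\<dots> = mat_delete (ext_cartan C d n) (i-1) (n-1) $$ (a,b)"
      using a b unfolding mat_delete_def by auto
    finally show "mat_delete M (n-1) (n-1) $$ (a,b) = mat_delete (ext_cartan C d n) (i-1) (n-1) $$ (a,b)" .
  qed (use M in auto)
  finally show ?thesis unfolding M_def .
qed

lemma cof_step:
  assumes "d \<le> n" "i - 1 < n" "d \<ge> 1"
  shows "cofactor (ext_cartan C d (Suc n)) (i-1) n = cofactor (ext_cartan C d n) (i-1) (n-1)"
proof -
  have "(-1::int)^(i-1+n) = - ((-1)^(i-1+(n-1)))"
    using assms by (cases n) auto
  thus ?thesis unfolding cofactor_def step[OF assms] by simp
qed

lemma cof_const:
  assumes "max i d \<le> n" "d \<ge> 1" "i \<ge> 1"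
  shows "cofactor (ext_cartan C d n) (i-1) (n-1) = cofactor (ext_cartan C d (max i d)) (i-1) (max i d - 1)"
  using assms(1)
proof (induction n rule: dec_induct)
  case base then show ?case by simp
next
  case (step m)
  have "cofactor (ext_cartan C d (Suc m)) (i-1) (Suc m - 1) = cofactor (ext_cartan C d m) (i-1) (m-1)"
    using cof_step[of d m i C] step assms by auto
  then show ?case using step by simp
qed

lemma cof_map: "cofactor (map_mat (of_int :: int \<Rightarrow> rat) A) i j = of_int (cofactor A i j)"
proof -
  have "mat_delete (map_mat (of_int :: int \<Rightarrow> rat) A) i j = map_mat of_int (mat_delete A i j)"
    by (intro eq_matI) (auto simp: mat_delete_def)
  then show ?thesis unfolding cofactor_def by (simp add: of_int_hom.hom_det)
qed

lemma sum_shift: "(\<Sum>k=1..n. f k) = (\<Sum>k<n. f (Suc k))"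
  by (induct n) (auto simp: atLeast0AtMost)

lemma key:
  fixes R :: "rat mat" and v :: "rat vec"
  assumes R: "R \<in> carrier_mat n n" and v: "v \<in> carrier_vec n"
    and hv: "R *\<^sub>v v = unit_vec n l" and l: "l < n" and k: "k < n"
  shows "det R * v $ k = cofactor R l k"
proof -
  have "det R * v $ k = (det R \<cdot>\<^sub>v v) $ k" using k v by auto
  also have "det R \<cdot>\<^sub>v v = (det R \<cdot>\<^sub>m 1\<^sub>m n) *\<^sub>v v" using v by auto
  also have "\<dots> = (adj_mat R * R) *\<^sub>v v" using adj_mat[OF R] by simp
  also have "\<dots> = adj_mat R *\<^sub>v unit_vec n l" using adj_mat[OF R] R v hv
    by (metis assoc_mult_mat_vec)
  also have "\<dots> $ k = row (adj_mat R) k \<bullet> unit_vec n l" using adj_mat[OF R] k by auto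
  also have "\<dots> = row (adj_mat R) k $ l" using l by simp
  also have "\<dots> = cofactor R l k" using adj_mat[OF R] k l R by (auto simp: adj_mat_def)
  finally show ?thesis .
qed

theorem lemma3p7:
  fixes C :: "int mat" and d n i :: nat and c :: "nat \<Rightarrow> rat"
  assumes "d \<ge> 1"
    and "gcm C d" and "symmetrizable C d"
    and "extensible C d"
    and "n \<ge> d" and "detX C d n \<noteq> 0"
    and "1 \<le> i" and "i \<le> n"
    and "fund_weight_coeffs C d n i c"
  shows "a_coef C d i = of_int (detX C d n) * c n"
proof -
  have Cc: "C \<in> carrier_mat d d" using assms(2) unfolding gcm_def by auto
  have dC: "det C \<noteq> 0" using assms(4) unfolding extensible_def by auto
  define E where "E = ext_cartan C d n"
  define R where "R = map_mat (of_int :: int \<Rightarrow> rat) E"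
  define v where "v = vec n (\<lambda>k. c (Suc k))"
  have R: "R \<in> carrier_mat n n" unfolding R_def E_def by simp
  have v: "v \<in> carrier_vec n" unfolding v_def by simp
  have hv: "R *\<^sub>v v = unit_vec n (i-1)"
  proof (rule eq_vecI)
    fix j assume "j < dim_vec (unit_vec n (i-1))"
    hence j: "j < n" by simp
    have "(R *\<^sub>v v) $ j = (\<Sum>k<n. of_int (E $$ (j,k)) * c (Suc k))"
      using j R unfolding v_def R_def by (auto simp: scalar_prod_def lessThan_atLeast0 intro!: sum.cong)
    also have "\<dots> = (\<Sum>k=1..n. of_int (E $$ (Suc j - 1, k - 1)) * c k)"
      by (subst sum_shift) simp
    also have "\<dots> = (if Suc j = i then 1 else 0)"
    proof -
      have "Suc j \<in> {1..n}" using j by auto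
      thus ?thesis using assms(9) unfolding fund_weight_coeffs_def E_def by blast
    qed
    also have "\<dots> = unit_vec n (i-1) $ j" using j assms(7) by (auto simp: unit_vec_def)
    finally show "(R *\<^sub>v v) $ j = unit_vec n (i-1) $ j" .
  qed (use R in simp)
  have "det R * v $ (n-1) = cofactor R (i-1) (n-1)"
    by (rule key[OF R v hv]) (use assms in auto)
  hence main: "of_int (detX C d n) * c n = of_int (cofactor E (i-1) (n-1))"
    using assms(5,1) unfolding R_def cof_map detX_def E_def v_def by (simp add: of_int_hom.hom_det)
  have cc: "cofactor E (i-1) (n-1) = cofactor (ext_cartan C d (max i d)) (i-1) (max i d - 1)"
    unfolding E_def by (rule cof_const) (use assms in auto)
  show ?thesis
  proof (cases "i \<le> d")
    case True
    hence mx: "max i d = d" by simp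
    define CR where "CR = map_mat (of_int :: int \<Rightarrow> rat) C"
    have CR: "CR \<in> carrier_mat d d" using Cc unfolding CR_def by simp
    have dCR: "det CR \<noteq> 0" using dC unfolding CR_def by (simp add: of_int_hom.hom_det)
    have U: "CR \<in> Units (ring_mat TYPE(rat) d ())" by (rule det_non_zero_imp_unit[OF CR dCR])
    obtain B where B: "mat_inverse CR = Some B"
      using mat_inverse(1)[OF CR, of "()"] U by (cases "mat_inverse CR") auto
    from mat_inverse(2)[OF CR B] have BB: "CR * B = 1\<^sub>m d" "B \<in> carrier_mat d d" by auto
    have rinv: "rat_inverse C = B" unfolding rat_inverse_def CR_def[symmetric] B by simp
    have "adj_mat CR = adj_mat CR * (CR * B)" using BB adj_mat[OF CR] by simp
    also have "\<dots> = (adj_mat CR * CR) * B" using BB adj_mat[OF CR] CR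
      by (metis assoc_mult_mat)
    also have "\<dots> = (det CR \<cdot>\<^sub>m 1\<^sub>m d) * B" using adj_mat[OF CR] by simp
    also have "\<dots> = det CR \<cdot>\<^sub>m B" using BB by (simp add: mult_smult_assoc_mat[of _ d d])
    finally have adjB: "adj_mat CR = det CR \<cdot>\<^sub>m B" .
    have "a_coef C d i = of_int (det C) * B $$ (d-1, i-1)"
      using True unfolding a_coef_def rinv by simp
    also have "\<dots> = adj_mat CR $$ (d-1, i-1)" unfolding adjB using BB assms True
      by (simp add: CR_def of_int_hom.hom_det)
    also have "\<dots> = cofactor CR (i-1) (d-1)" using CR assms True by (simp add: adj_mat_def)
    also have "\<dots> = of_int (cofactor C (i-1) (d-1))" unfolding CR_def cof_map ..
    finally show ?thesis using main cc mx ext_d[OF Cc] by simp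
  next
    case False
    hence mx: "max i d = i" by simp
    have "mat_delete (ext_cartan C d i) (i-1) (i-1) = ext_cartan C d (i-1)"
    proof (rule eq_matI)
      fix a b assume "a < dim_row (ext_cartan C d (i-1))" "b < dim_col (ext_cartan C d (i-1))"
      hence a: "a < i-1" and b: "b < i-1" by auto
      have "mat_delete (ext_cartan C d i) (i-1) (i-1) $$ (a,b) = ext_cartan C d i $$ (a,b)"
        using a b unfolding mat_delete_def by auto
      also have "\<dots> = ext_cartan C d (i-1) $$ (a,b)" using a b by (intro ext_sub) auto
      finally show "mat_delete (ext_cartan C d i) (i-1) (i-1) $$ (a,b) = ext_cartan C d (i-1) $$ (a,b)" .
    qed auto
    hence "cofactor (ext_cartan C d i) (i-1) (i-1) = detX C d (i-1)"
      unfolding cofactor_def detX_def by (simp add: mult_2[symmetric])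
    then show ?thesis using main cc mx False unfolding a_coef_def by simp
  qed
qed

end
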